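(* Let $G$ be a finite, simple, connected graph without isolated vertices. Then Dom has a winning strategy in the Sepy-start Disjoint Domination Game played on $G$.
   Context: For a vertex $v$ of a graph $G$, $N[v]$ denotes its closed neighborhood ($v$ together with its neighbors). The Disjoint Domination Game on an isolate-free graph $G$ is played by two players, Dom and Sepy, with the color set $\{p,b\}$ (purple and blue). At any stage, $V_p$ and $V_b$ denote the sets of vertices colored $p$ and $b$, respectively, and for a color $c$ we write $\bar c$ for the other color. The players alternately make moves; either player may use either color. A move consists of choosing a vertex $v$ and a color $c\in\{p,b\}$ such that (i) $v$ is not yet colored, and (ii) there is a vertex $u\in N[v]$ with $N[u]\cap V_c=\emptyset$ (evaluated before the move); then $v$ receives color $c$. A player must make a legal move on his turn (no passing). The game terminates as soon as one of the following holds: (s* ) some vertex $v$ has a monochromatic closed neighborhood, i.e. $N[v]\subseteq V_p$ or $N[v]\subseteq V_b$ — then Sepy wins; (d* ) both $V_p$ and $V_b$ are dominating sets of $G$ — then Dom wins. In the Sepy-start game, Sepy makes the first move. *)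

theory Defs
  imports Main
begin

definition simple_graph :: "'a set \<Rightarrow> ('a \<Rightarrow> 'a \<Rightarrow> bool) \<Rightarrow> bool" where
  "simple_graph V E \<longleftrightarrow> finite V \<and> (\<forall>u v. E u v \<longrightarrow> u \<in> V \<and> v \<in> V)
     \<and> (\<forall>u v. E u v \<longrightarrow> E v u) \<and> (\<forall>u. \<not> E u u)"

definition connected_graph :: "'a set \<Rightarrow> ('a \<Rightarrow> 'a \<Rightarrow> bool) \<Rightarrow> bool" where
  "connected_graph V E \<longleftrightarrow> (\<forall>u\<in>V. \<forall>v\<in>V. E\<^sup>*\<^sup>* u v)"

definition isolate_free :: "'a set \<Rightarrow> ('a \<Rightarrow> 'a \<Rightarrow> bool) \<Rightarrow> bool" where
  "isolate_free V E \<longleftrightarrow> (\<forall>v\<in>V. \<exists>u. E v u)"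

definition cnbh :: "'a set \<Rightarrow> ('a \<Rightarrow> 'a \<Rightarrow> bool) \<Rightarrow> 'a \<Rightarrow> 'a set" where
  "cnbh V E v = insert v {u \<in> V. E v u}"

datatype color = Purple | Blue

type_synonym 'a position = "'a \<Rightarrow> color option"

definition color_class :: "'a set \<Rightarrow> 'a position \<Rightarrow> color \<Rightarrow> 'a set" where
  "color_class V col c = {v \<in> V. col v = Some c}"

definition dominating :: "'a set \<Rightarrow> ('a \<Rightarrow> 'a \<Rightarrow> bool) \<Rightarrow> 'a set \<Rightarrow> bool" where
  "dominating V E D \<longleftrightarrow> D \<subseteq> V \<and> (\<forall>v\<in>V. cnbh V E v \<inter> D \<noteq> {})"

definition legal_move :: "'a set \<Rightarrow> ('a \<Rightarrow> 'a \<Rightarrow> bool) \<Rightarrow> 'a position \<Rightarrow> 'a \<Rightarrow> color \<Rightarrow> bool" where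
  "legal_move V E col v c \<longleftrightarrow> v \<in> V \<and> col v = None \<and>
     (\<exists>u\<in>cnbh V E v. cnbh V E u \<inter> color_class V col c = {})"

definition sepy_cond :: "'a set \<Rightarrow> ('a \<Rightarrow> 'a \<Rightarrow> bool) \<Rightarrow> 'a position \<Rightarrow> bool" where
  "sepy_cond V E col \<longleftrightarrow> (\<exists>v\<in>V. \<exists>c. cnbh V E v \<subseteq> color_class V col c)"

definition dom_cond :: "'a set \<Rightarrow> ('a \<Rightarrow> 'a \<Rightarrow> bool) \<Rightarrow> 'a position \<Rightarrow> bool" where
  "dom_cond V E col \<longleftrightarrow> dominating V E (color_class V col Purple)
                        \<and> dominating V E (color_class V col Blue)"

definition terminal :: "'a set \<Rightarrow> ('a \<Rightarrow> 'a \<Rightarrow> bool) \<Rightarrow> 'a position \<Rightarrow> bool" where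
  "terminal V E col \<longleftrightarrow> sepy_cond V E col \<or> dom_cond V E col"

text \<open>dom_wins V E dom_turn col: Dom has a winning strategy from position col, where
  dom_turn says whether Dom is to move. Since every move colours a new vertex of the
  finite graph, the game is finite and the least fixed point captures winning strategies.\<close>
inductive dom_wins :: "'a set \<Rightarrow> ('a \<Rightarrow> 'a \<Rightarrow> bool) \<Rightarrow> bool \<Rightarrow> 'a position \<Rightarrow> bool"
  for V E where
  finished: "\<not> sepy_cond V E col \<Longrightarrow> dom_cond V E col \<Longrightarrow> dom_wins V E t col"
| dom_move: "\<not> terminal V E col \<Longrightarrow> legal_move V E col v c \<Longrightarrow>
     dom_wins V E False (col(v := Some c)) \<Longrightarrow> dom_wins V E True col"
| sepy_move: "\<not> terminal V E col \<Longrightarrow> (\<exists>v c. legal_move V E col v c) \<Longrightarrow>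
     (\<forall>v c. legal_move V E col v c \<longrightarrow> dom_wins V E True (col(v := Some c))) \<Longrightarrow>
     dom_wins V E False col"

end

theory Submission
  imports Defs
begin

fun opp :: "color \<Rightarrow> color" where
  "opp Purple = Blue" | "opp Blue = Purple"

lemma opp_neq[simp]: "opp c \<noteq> c" by (cases c) auto
lemma opp_neq2[simp]: "c \<noteq> opp c" by (cases c) auto
lemma opp_opp[simp]: "opp (opp c) = c" by (cases c) auto
lemma color_cases: "c = d \<or> c = opp d" by (cases c; cases d) auto

definition inv :: "'a set \<Rightarrow> ('a \<Rightarrow> 'a \<Rightarrow> bool) \<Rightarrow> 'a position \<Rightarrow> bool" where
  "inv V E col \<longleftrightarrow> (\<forall>x\<in>V. \<forall>d. col x = Some d \<longrightarrow> (\<exists>w. E x w \<and> col w = Some (opp d)))"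

lemma cross:
  assumes "E\<^sup>*\<^sup>* a b" "P a" "\<not> P b"
  shows "\<exists>x y. P x \<and> \<not> P y \<and> E x y"
  using assms
proof (induction rule: rtranclp_induct)
  case base then show ?case by simp
next
  case (step y z)
  then show ?case by (cases "P y") auto
qed

lemma inv_dom_both:
  assumes sg: "simple_graph V E" and I: "inv V E col" and x: "x \<in> V" "col x = Some d"
  shows "cnbh V E x \<inter> color_class V col c \<noteq> {}"
proof (cases "c = d")
  case True
  then show ?thesis using x by (auto simp: cnbh_def color_class_def)
next
  case False
  then have c: "c = opp d" using color_cases by blast
  obtain w where w: "E x w" "col w = Some (opp d)" using I x unfolding inv_def by blast
  have "w \<in> V" using sg w unfolding simple_graph_def by blast
  then have "w \<in> cnbh V E x \<inter> color_class V col c" using w c by (auto simp: cnbh_def color_class_def)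
  then show ?thesis by blast
qed

lemma inv_not_sepy:
  assumes sg: "simple_graph V E" and I: "inv V E col"
  shows "\<not> sepy_cond V E col"
proof
  assume "sepy_cond V E col"
  then obtain x c where x: "x \<in> V" "cnbh V E x \<subseteq> color_class V col c"
    unfolding sepy_cond_def by blast
  have "x \<in> cnbh V E x" by (simp add: cnbh_def)
  then have cx: "col x = Some c" using x by (auto simp: color_class_def)
  have "cnbh V E x \<inter> color_class V col (opp c) \<noteq> {}" using inv_dom_both[OF sg I x(1) cx] .
  then obtain y where "y \<in> cnbh V E x" "col y = Some (opp c)" by (auto simp: color_class_def)
  moreover then have "y \<in> color_class V col c" using x by blast
  then have "col y = Some c" by (simp add: color_class_def)
  ultimately show False by simp
qed

lemma nondom:
  assumes "\<not> dom_cond V E col"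
  shows "\<exists>u\<in>V. \<exists>c. cnbh V E u \<inter> color_class V col c = {}"
  using assms unfolding dom_cond_def dominating_def color_class_def by blast

lemma sepy_has_move:
  assumes sg: "simple_graph V E" and I: "inv V E col" and nd: "\<not> dom_cond V E col"
  shows "\<exists>v c. legal_move V E col v c"
proof -
  obtain u c where u: "u \<in> V" "cnbh V E u \<inter> color_class V col c = {}" using nondom[OF nd] by blast
  have "col u = None"
  proof (rule ccontr)
    assume "col u \<noteq> None"
    then obtain d where "col u = Some d" by auto
    from inv_dom_both[OF sg I u(1) this] u(2) show False by blast
  qed
  moreover have "u \<in> cnbh V E u" by (simp add: cnbh_def)
  ultimately have "legal_move V E col u c" using u unfolding legal_move_def by blast
  then show ?thesis by blast
qed

lemma after_sepy_not_sepy: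
  assumes sg: "simple_graph V E" and isf: "isolate_free V E" and I: "inv V E col"
    and lm: "legal_move V E col v c"
  shows "\<not> sepy_cond V E (col(v := Some c))"
proof
  assume "sepy_cond V E (col(v := Some c))"
  then obtain x d where x: "x \<in> V" "cnbh V E x \<subseteq> color_class V (col(v := Some c)) d"
    unfolding sepy_cond_def by blast
  have vV: "v \<in> V" and cv: "col v = None" and
    lu: "\<exists>u\<in>cnbh V E v. cnbh V E u \<inter> color_class V col c = {}" using lm unfolding legal_move_def by auto
  have "x \<in> cnbh V E x" by (simp add: cnbh_def)
  then have cx: "(col(v := Some c)) x = Some d" using x by (auto simp: color_class_def)
  show False
  proof (cases "x = v")
    case False
    then have "col x = Some d" using cx by simp
    then obtain w where w: "E x w" "col w = Some (opp d)" using I x unfolding inv_def by blast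
    have "w \<in> V" using sg w unfolding simple_graph_def by blast
    then have "w \<in> cnbh V E x" using w by (simp add: cnbh_def)
    then have "(col(v := Some c)) w = Some d" using x by (auto simp: color_class_def)
    moreover have "w \<noteq> v" using w cv by auto
    ultimately show False using w by simp
  next
    case True
    then have dc: "d = c" using cx by simp
    obtain u where u: "u \<in> cnbh V E v" "cnbh V E u \<inter> color_class V col c = {}" using lu by blast
    show False
    proof (cases "u = v")
      case True
      obtain w where w: "E v w" using isf vV unfolding isolate_free_def by blast
      have wV: "w \<in> V" and wv: "w \<noteq> v" using sg w unfolding simple_graph_def by blast+
      then have "w \<in> cnbh V E v" using w by (simp add: cnbh_def)
      then have "col w = Some c" using x \<open>x = v\<close> dc wv by (auto simp: color_class_def)
      then have "w \<in> cnbh V E u \<inter> color_class V col c" using True wV w by (auto simp: cnbh_def color_class_def)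
      then show False using u by blast
    next
      case False
      have uV: "u \<in> V" using u(1) vV by (auto simp: cnbh_def)
      have "col u = Some c" using x \<open>x = v\<close> dc u(1) False by (auto simp: color_class_def)
      then have "u \<in> cnbh V E u \<inter> color_class V col c" using uV by (auto simp: cnbh_def color_class_def)
      then show False using u by blast
    qed
  qed
qed

lemma inv_step:
  assumes I: "inv V E col" and cy: "col y = None" and z: "E y z" "col z = Some (opp c')"
    and irr: "\<not> E y y"
  shows "inv V E (col(y := Some c'))"
  unfolding inv_def
proof (intro ballI allI impI)
  fix x d assume xV: "x \<in> V" and cx: "(col(y := Some c')) x = Some d"
  show "\<exists>w. E x w \<and> (col(y := Some c')) w = Some (opp d)"
  proof (cases "x = y")
    case True
    then have "d = c'" using cx by simp
    moreover have "z \<noteq> y" using z irr by auto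
    ultimately show ?thesis using z True by auto
  next
    case False
    then have "col x = Some d" using cx by simp
    then obtain w where w: "E x w" "col w = Some (opp d)" using I xV unfolding inv_def by blast
    then have "w \<noteq> y" using cy by auto
    then show ?thesis using w by auto
  qed
qed

lemma lemmaA:
  assumes sg: "simple_graph V E" and conn: "connected_graph V E" and I: "inv V E col"
    and nd: "\<not> dom_cond V E col" and x0: "x0 \<in> V" "col x0 = Some d0"
  shows "\<exists>y c'. legal_move V E col y c' \<and> (\<exists>z. E y z \<and> col z = Some (opp c'))"
proof -
  have sym: "\<And>a b. E a b \<Longrightarrow> E b a" and inV: "\<And>a b. E a b \<Longrightarrow> a \<in> V \<and> b \<in> V"
    and irr: "\<And>a. \<not> E a a" using sg unfolding simple_graph_def by blast+
  obtain u c where u: "u \<in> V" "cnbh V E u \<inter> color_class V col c = {}" using nondom[OF nd] by blast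
  show ?thesis
  proof (cases "\<exists>z\<in>cnbh V E u. col z \<noteq> None")
    case True
    then obtain z e where z: "z \<in> cnbh V E u" "col z = Some e" by auto
    have zV: "z \<in> V" using z u by (auto simp: cnbh_def)
    have "e \<noteq> c" using z zV u by (auto simp: color_class_def)
    then have ec: "e = opp c" using color_cases[of c e] by auto
    have cu: "col u = None"
    proof (rule ccontr)
      assume "col u \<noteq> None"
      then obtain f where "col u = Some f" by auto
      from inv_dom_both[OF sg I u(1) this] u(2) show False by blast
    qed
    then have "z \<noteq> u" using z by auto
    then have "E u z" using z by (auto simp: cnbh_def)
    moreover have "legal_move V E col u c" using u cu unfolding legal_move_def by (auto simp: cnbh_def)
    ultimately show ?thesis using z ec by blast
  next
    case False
    define P where "P x \<longleftrightarrow> x \<in> V \<and> (\<forall>z\<in>cnbh V E x. col z = None)" for x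
    have Pu: "P u" using False u by (auto simp: P_def)
    have nP: "\<not> P x0" using x0 by (auto simp: P_def cnbh_def)
    have "E\<^sup>*\<^sup>* u x0" using conn u x0 unfolding connected_graph_def by blast
    from cross[OF this Pu nP] obtain a b where ab: "P a" "\<not> P b" "E a b" by blast
    have bV: "b \<in> V" using inV ab by blast
    have cb: "col b = None" using ab bV by (auto simp: P_def cnbh_def)
    obtain z e where z: "z \<in> cnbh V E b" "col z = Some e" using ab(2) bV by (auto simp: P_def)
    have "z \<noteq> b" using z cb by auto
    then have Ebz: "E b z" using z by (auto simp: cnbh_def)
    have aV: "a \<in> V" using ab by (auto simp: P_def)
    have "a \<in> cnbh V E b" using sym[OF ab(3)] aV by (auto simp: cnbh_def)
    moreover have "cnbh V E a \<inter> color_class V col (opp e) = {}" using ab(1)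
      by (auto simp: P_def color_class_def)
    ultimately have "legal_move V E col b (opp e)" using bV cb unfolding legal_move_def by blast
    moreover have "col z = Some (opp (opp e))" using z by simp
    ultimately show ?thesis using Ebz by blast
  qed
qed

lemma dom_response:
  assumes sg: "simple_graph V E" and conn: "connected_graph V E" and isf: "isolate_free V E"
    and I: "inv V E col" and lm: "legal_move V E col v c"
    and nd: "\<not> dom_cond V E (col(v := Some c))"
  shows "\<exists>y c'. legal_move V E (col(v := Some c)) y c' \<and> inv V E ((col(v := Some c))(y := Some c'))"
proof -
  have sym: "\<And>a b. E a b \<Longrightarrow> E b a" and inV: "\<And>a b. E a b \<Longrightarrow> a \<in> V \<and> b \<in> V"
    and irr: "\<And>a. \<not> E a a" using sg unfolding simple_graph_def by blast+
  have vV: "v \<in> V" and cv: "col v = None" and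
    lu: "\<exists>u\<in>cnbh V E v. cnbh V E u \<inter> color_class V col c = {}" using lm unfolding legal_move_def by auto
  let ?col = "col(v := Some c)"
  show ?thesis
  proof (cases "\<exists>w. E v w \<and> col w = Some (opp c)")
    case True
    then obtain w0 where w0: "E v w0" "col w0 = Some (opp c)" by blast
    have I': "inv V E ?col"
      using inv_step[OF I cv w0 irr] by simp
    from lemmaA[OF sg conn I' nd vV] obtain y c' z where
      y: "legal_move V E ?col y c'" "E y z" "?col z = Some (opp c')" by auto
    have "?col y = None" using y unfolding legal_move_def by auto
    from inv_step[OF I' this y(2,3) irr] y show ?thesis by blast
  next
    case False
    have "\<exists>w. E v w \<and> col w = None"
    proof (rule ccontr)
      assume H: "\<not> (\<exists>w. E v w \<and> col w = None)"
      have allc: "\<And>w. E v w \<Longrightarrow> col w = Some c"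
      proof -
        fix w assume "E v w"
        with H False obtain e where "col w = Some e" "e \<noteq> opp c" by (cases "col w") auto
        then show "col w = Some c" using color_cases[of e c] by auto
      qed
      obtain u where u: "u \<in> cnbh V E v" "cnbh V E u \<inter> color_class V col c = {}" using lu by blast
      show False
      proof (cases "u = v")
        case True
        obtain w where w: "E v w" using isf vV unfolding isolate_free_def by blast
        have "w \<in> cnbh V E u \<inter> color_class V col c" using True w allc[OF w] inV[OF w]
          by (auto simp: cnbh_def color_class_def)
        then show False using u by blast
      next
        case False
        then have "E v u" "u \<in> V" using u by (auto simp: cnbh_def)
        then have "u \<in> cnbh V E u \<inter> color_class V col c" using allc
          by (auto simp: cnbh_def color_class_def)
        then show False using u by blast
      qed
    qed
    then obtain w where w: "E v w" "col w = None" by blast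
    have wv: "w \<noteq> v" using w irr by auto
    have wV: "w \<in> V" using inV w by blast
    have "v \<in> cnbh V E w" using sym[OF w(1)] vV by (auto simp: cnbh_def)
    moreover have "cnbh V E v \<inter> color_class V ?col (opp c) = {}"
    proof -
      { fix x assume "x \<in> cnbh V E v" "?col x = Some (opp c)"
        then have "x \<noteq> v" by auto
        then have "E v x" "col x = Some (opp c)" using \<open>x \<in> cnbh V E v\<close> \<open>?col x = _\<close> by (auto simp: cnbh_def)
        then have False using False by blast }
      then show ?thesis unfolding color_class_def by blast
    qed
    ultimately have lm2: "legal_move V E ?col w (opp c)" using wV w wv unfolding legal_move_def by auto
    have "inv V E (?col(w := Some (opp c)))"
      unfolding inv_def
    proof (intro ballI allI impI)
      fix x d assume xV: "x \<in> V" and cx: "(?col(w := Some (opp c))) x = Some d"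
      show "\<exists>w'. E x w' \<and> (?col(w := Some (opp c))) w' = Some (opp d)"
      proof (cases "x = w")
        case True
        then show ?thesis using cx sym[OF w(1)] wv by auto
      next
        case False
        show ?thesis
        proof (cases "x = v")
          case True
          then show ?thesis using cx w(1) wv False by auto
        next
          case False
          then have "col x = Some d" using cx \<open>x \<noteq> w\<close> by simp
          then obtain w' where w': "E x w'" "col w' = Some (opp d)" using I xV unfolding inv_def by blast
          then have "w' \<noteq> v" "w' \<noteq> w" using cv w(2) by auto
          then show ?thesis using w' by auto
        qed
      qed
    qed
    then show ?thesis using lm2 by blast
  qed
qed

lemma main:
  assumes sg: "simple_graph V E" and conn: "connected_graph V E" and isf: "isolate_free V E"
  shows "card {x\<in>V. col x = None} = n \<Longrightarrow> inv V E col \<Longrightarrow> dom_wins V E False col"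
proof (induction n arbitrary: col rule: less_induct)
  case (less n col)
  have fin: "finite V" using sg unfolding simple_graph_def by blast
  have ns: "\<not> sepy_cond V E col" using inv_not_sepy[OF sg less.prems(2)] .
  show ?case
  proof (cases "dom_cond V E col")
    case True
    then show ?thesis by (rule dom_wins.finished[OF ns])
  next
    case nd: False
    have nt: "\<not> terminal V E col" using ns nd by (simp add: terminal_def)
    show ?thesis
    proof (rule dom_wins.sepy_move[OF nt])
      show "\<exists>v c. legal_move V E col v c" using sepy_has_move[OF sg less.prems(2) nd] .
      show "\<forall>v c. legal_move V E col v c \<longrightarrow> dom_wins V E True (col(v := Some c))"
      proof (intro allI impI)
        fix v c assume lm: "legal_move V E col v c"
        let ?col = "col(v := Some c)"
        have ns': "\<not> sepy_cond V E ?col" using after_sepy_not_sepy[OF sg isf less.prems(2) lm] .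
        show "dom_wins V E True ?col"
        proof (cases "dom_cond V E ?col")
          case True
          then show ?thesis by (rule dom_wins.finished[OF ns'])
        next
          case False
          then have nt': "\<not> terminal V E ?col" using ns' by (simp add: terminal_def)
          obtain y c' where y: "legal_move V E ?col y c'" "inv V E (?col(y := Some c'))"
            using dom_response[OF sg conn isf less.prems(2) lm False] by blast
          have vV: "v \<in> V" "col v = None" using lm unfolding legal_move_def by auto
          have yV: "y \<in> V" "?col y = None" using y unfolding legal_move_def by auto
          have yv: "y \<noteq> v" using yV by auto
          have sub: "{x\<in>V. (?col(y := Some c')) x = None} \<subseteq> {x\<in>V. col x = None} - {v}"
            by auto
          have "y \<in> {x\<in>V. col x = None} - {v}" using yV yv by auto
          moreover have "y \<notin> {x\<in>V. (?col(y := Some c')) x = None}" by simp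
          ultimately have "{x\<in>V. (?col(y := Some c')) x = None} \<subset> {x\<in>V. col x = None} - {v}"
            using sub by blast
          then have "card {x\<in>V. (?col(y := Some c')) x = None} < card ({x\<in>V. col x = None} - {v})"
            using fin by (intro psubset_card_mono) auto
          also have "\<dots> < card {x\<in>V. col x = None}"
            using fin vV by (intro psubset_card_mono) auto
          finally have "card {x\<in>V. (?col(y := Some c')) x = None} < n" using less.prems(1) by simp
          then have "dom_wins V E False (?col(y := Some c'))" using less.IH y(2) by blast
          then show ?thesis by (rule dom_wins.dom_move[OF nt' y(1)])
        qed
      qed
    qed
  qed
qed

theorem theorem3:
  fixes V :: "'a set" and E :: "'a \<Rightarrow> 'a \<Rightarrow> bool"
  assumes "simple_graph V E"
    and "connected_graph V E"
    and "isolate_free V E"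
  shows "dom_wins V E False (\<lambda>_. None)"
proof -
  have "inv V E (\<lambda>_. None)" by (simp add: inv_def)
  then show ?thesis using main[OF assms refl] by blast
qed

end
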